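(* In the setting of the context, let $\omega\in\mathcal{C}\setminus W_\Omega(T)$ and let $\epsilon_0$ be defined from $\omega$ as in the context. Then $\|T^{-1}(\omega)\|\le1/\epsilon_0$.
   Context: Let $\mathcal{H}$ be a Hilbert space, $A$ a selfadjoint (possibly unbounded) operator in $\mathcal{H}$ and $B$ a nonzero bounded selfadjoint operator. Let $c\ge0$, $d>0$, $\delta_\pm:=\pm\sqrt{c-d^2/4}-id/2$ (principal square root), $\mathcal{C}:=\mathbb{C}\setminus\{\delta_+,\delta_-\}$ and $T(\omega):=A-\omega^2-\frac{\omega^2}{c-id\omega-\omega^2}B$ with $\operatorname{dom}T(\omega)=\operatorname{dom}A$, $\omega\in\mathcal{C}$. $W(A),W(B)$ are numerical ranges. For real $\alpha,\beta$ let $p_{(\alpha,\beta)}(\omega):=(\alpha-\omega^2)(c-id\omega-\omega^2)-\beta\omega^2$ with roots $r_1,\dots,r_4$ labelled continuously in $(\alpha,\beta)$ and extended by limits to $\overline{\mathbb{R}}\times\mathbb{R}$ ($\overline{\mathbb{R}}=\mathbb{R}\cup\{\pm\infty\}$), values in $\overline{\mathbb{C}}$; $\Omega:=\overline{W(A)}\times\overline{W(B)}$ (closure in $\overline{\mathbb{R}}$), $W_\Omega(T):=\bigcup_n r_n(\Omega)$. For $\omega\in\mathcal{C}$ put $\kappa:=\frac{\omega^2}{c-id\omega-\omega^2}$, $\lambda:=\omega^2$ (subscripts $\Re,\Im$ denote real and imaginary parts). If $\kappa_\Re=0$, $\epsilon_0:=\sqrt{\min_{\beta\in W(B)}|\beta\kappa_\Im+\lambda_\Im|^2+\min_{\alpha\in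 W(A)}|\alpha-\lambda_\Re|^2}$. If $\kappa_\Re\neq0$: $\beta_{\inf},\beta_{\sup}$ are the values in $\overline{W(B)}$ closest to $-\frac{\kappa_\Im\lambda_\Im-\kappa_\Re(\inf W(A)-\lambda_\Re)}{|\kappa|^2}$ and $-\frac{\kappa_\Im\lambda_\Im-\kappa_\Re(\sup W(A)-\lambda_\Re)}{|\kappa|^2}$; $\mathcal{B}:=\left[\frac{\inf W(A)-\lambda_\Re}{\kappa_\Re},\frac{\sup W(A)-\lambda_\Re}{\kappa_\Re}\right]$; $\Omega':=\{(\inf W(A),\beta_{\inf}),(\sup W(A),\beta_{\sup})\}$ if $\mathcal{B}\cap\overline{W(B)}=\emptyset$, and otherwise $\Omega'$ additionally contains $(\alpha_{op},\beta_{op})$, where $\beta_{op}$ is the value in $\mathcal{B}\cap\overline{W(B)}$ closest to $-\lambda_\Im/\kappa_\Im$ (arbitrary if $\kappa_\Im=0$) and $\alpha_{op}:=\beta_{op}\kappa_\Re+\lambda_\Re$; then $\epsilon_0:=\min_{(\alpha,\beta)\in\Omega'}\sqrt{|\beta\kappa_\Im+\lambda_\Im|^2+|\alpha-\kappa_\Re\beta-\lambda_\Re|^2}$. *)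

theory Defs
  imports "HOL-Analysis.Analysis"
begin

text \<open>A complex Hilbert space is modelled as a real Banach space carrying a complex
structure J (multiplication by the imaginary unit) and a complex inner product ip,
linear in the first argument, conjugate symmetric, whose induced norm is the given norm.\<close>

definition scaleC :: "('a::real_vector \<Rightarrow> 'a) \<Rightarrow> complex \<Rightarrow> 'a \<Rightarrow> 'a" where
  "scaleC J a x = Re a *\<^sub>R x + Im a *\<^sub>R J x"

definition hilbert_space :: "('a::{real_normed_vector,complete_space} \<Rightarrow> 'a) \<Rightarrow> ('a \<Rightarrow> 'a \<Rightarrow> complex) \<Rightarrow> bool" where
  "hilbert_space J ip \<longleftrightarrow>
     linear J \<and> (\<forall>x. J (J x) = - x) \<and>
     (\<forall>x y z. ip (x + y) z = ip x z + ip y z) \<and>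
     (\<forall>r x y. ip (r *\<^sub>R x) y = complex_of_real r * ip x y) \<and>
     (\<forall>x y. ip (J x) y = \<i> * ip x y) \<and>
     (\<forall>x y. ip y x = cnj (ip x y)) \<and>
     (\<forall>x. ip x x = complex_of_real ((norm x)\<^sup>2))"

definition csubspace :: "('a::real_vector \<Rightarrow> 'a) \<Rightarrow> 'a set \<Rightarrow> bool" where
  "csubspace J D \<longleftrightarrow> subspace D \<and> (\<forall>x\<in>D. J x \<in> D)"

definition clinear_on :: "('a::real_vector \<Rightarrow> 'a) \<Rightarrow> 'a set \<Rightarrow> ('a \<Rightarrow> 'a) \<Rightarrow> bool" where
  "clinear_on J D A \<longleftrightarrow>
     (\<forall>x\<in>D. \<forall>y\<in>D. A (x + y) = A x + A y) \<and>
     (\<forall>r. \<forall>x\<in>D. A (r *\<^sub>R x) = r *\<^sub>R A x) \<and>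
     (\<forall>x\<in>D. A (J x) = J (A x))"

text \<open>Selfadjoint (possibly unbounded) operator A with domain D: densely defined,
linear, and equal to its adjoint (the adjoint's domain is the set of y for which
x \<mapsto> ip (A x) y is represented by some z, and A* y = z).\<close>
definition selfadjoint :: "('a::{real_normed_vector,complete_space} \<Rightarrow> 'a) \<Rightarrow> ('a \<Rightarrow> 'a \<Rightarrow> complex)
     \<Rightarrow> 'a set \<Rightarrow> ('a \<Rightarrow> 'a) \<Rightarrow> bool" where
  "selfadjoint J ip D A \<longleftrightarrow>
     csubspace J D \<and> closure D = UNIV \<and> clinear_on J D A \<and>
     (\<forall>y. y \<in> D \<longleftrightarrow> (\<exists>z. \<forall>x\<in>D. ip (A x) y = ip x z)) \<and>
     (\<forall>x\<in>D. \<forall>y\<in>D. ip (A x) y = ip x (A y))"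

definition bounded_selfadjoint :: "('a::{real_normed_vector,complete_space} \<Rightarrow> 'a) \<Rightarrow> ('a \<Rightarrow> 'a \<Rightarrow> complex)
     \<Rightarrow> ('a \<Rightarrow> 'a) \<Rightarrow> bool" where
  "bounded_selfadjoint J ip B \<longleftrightarrow>
     bounded_linear B \<and> (\<forall>x. B (J x) = J (B x)) \<and> (\<forall>x y. ip (B x) y = ip x (B y))"

definition numrange :: "('a::real_normed_vector \<Rightarrow> 'a \<Rightarrow> complex) \<Rightarrow> 'a set \<Rightarrow> ('a \<Rightarrow> 'a) \<Rightarrow> complex set" where
  "numrange ip D A = {ip (A x) x | x. x \<in> D \<and> norm x = 1}"

definition kappa :: "real \<Rightarrow> real \<Rightarrow> complex \<Rightarrow> complex" where
  "kappa c d \<omega> = \<omega>\<^sup>2 / (complex_of_real c - \<i> * complex_of_real d * \<omega> - \<omega>\<^sup>2)"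

definition Top :: "('a::real_vector \<Rightarrow> 'a) \<Rightarrow> real \<Rightarrow> real \<Rightarrow> ('a \<Rightarrow> 'a) \<Rightarrow> ('a \<Rightarrow> 'a) \<Rightarrow> complex \<Rightarrow> 'a \<Rightarrow> 'a" where
  "Top J c d A B \<omega> x = A x - scaleC J (\<omega>\<^sup>2) x - scaleC J (kappa c d \<omega>) (B x)"

definition delta_plus :: "real \<Rightarrow> real \<Rightarrow> complex" where
  "delta_plus c d = csqrt (complex_of_real (c - d\<^sup>2 / 4)) - \<i> * complex_of_real (d / 2)"

definition delta_minus :: "real \<Rightarrow> real \<Rightarrow> complex" where
  "delta_minus c d = - csqrt (complex_of_real (c - d\<^sup>2 / 4)) - \<i> * complex_of_real (d / 2)"

definition ppoly :: "real \<Rightarrow> real \<Rightarrow> real \<Rightarrow> real \<Rightarrow> complex \<Rightarrow> complex" where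
  "ppoly c d \<alpha> \<beta> \<omega> = (complex_of_real \<alpha> - \<omega>\<^sup>2) * (complex_of_real c - \<i> * complex_of_real d * \<omega> - \<omega>\<^sup>2)
                       - complex_of_real \<beta> * \<omega>\<^sup>2"

text \<open>Finite part of the enclosure W_Omega(T): the roots of p_(alpha,beta) for
(alpha,beta) in closure W(A) x closure W(B) (finite alpha), together with the limit
roots delta_+, delta_- that arise at alpha = +-infinity when W(A) is unbounded.
(The point infinity of the extended plane is not a complex number and is omitted.)\<close>
definition W_Omega :: "real \<Rightarrow> real \<Rightarrow> real set \<Rightarrow> real set \<Rightarrow> complex set" where
  "W_Omega c d WA WB =
     {\<omega>. \<exists>\<alpha>\<in>closure WA. \<exists>\<beta>\<in>closure WB. ppoly c d \<alpha> \<beta> \<omega> = 0}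
     \<union> (if bounded WA then {} else {delta_plus c d, delta_minus c d})"

definition closest :: "real set \<Rightarrow> real \<Rightarrow> real" where
  "closest S t = (SOME b. b \<in> S \<and> (\<forall>b'\<in>S. \<bar>b - t\<bar> \<le> \<bar>b' - t\<bar>))"

text \<open>WA, WB are the (real) numerical ranges of A and B. Points of Omega' whose first
coordinate is inf W(A) = -infinity or sup W(A) = +infinity contribute the value
+infinity to the minimum and are therefore omitted.\<close>
definition eps0 :: "real \<Rightarrow> real \<Rightarrow> real set \<Rightarrow> real set \<Rightarrow> complex \<Rightarrow> real" where
  "eps0 c d WA WB \<omega> =
    (let lam = \<omega>\<^sup>2; \<kappa> = kappa c d \<omega>;
         lR = Re lam; lI = Im lam; kR = Re \<kappa>; kI = Im \<kappa>
     in if kR = 0 then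
          sqrt ((INF \<beta>\<in>WB. (\<beta> * kI + lI)\<^sup>2) + (INF \<alpha>\<in>WA. (\<alpha> - lR)\<^sup>2))
        else
          (let Bs = {\<beta>. (bdd_below WA \<longrightarrow> Inf WA \<le> kR * \<beta> + lR) \<and>
                        (bdd_above WA \<longrightarrow> kR * \<beta> + lR \<le> Sup WA)};
               binf = closest (closure WB) (- (kI * lI - kR * (Inf WA - lR)) / (cmod \<kappa>)\<^sup>2);
               bsup = closest (closure WB) (- (kI * lI - kR * (Sup WA - lR)) / (cmod \<kappa>)\<^sup>2);
               bop = closest (Bs \<inter> closure WB) (- lI / kI);
               Om' = (if bdd_below WA then {(Inf WA, binf)} else {})
                   \<union> (if bdd_above WA then {(Sup WA, bsup)} else {})
                   \<union> (if Bs \<inter> closure WB = {} then {} else {(bop * kR + lR, bop)})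
           in INF p\<in>Om'. sqrt ((snd p * kI + lI)\<^sup>2 + (fst p - kR * snd p - lR)\<^sup>2)))"

end

theory Submission
  imports Defs
begin


definition E :: "real set \<Rightarrow> real set \<Rightarrow> real \<Rightarrow> real \<Rightarrow> real \<Rightarrow> real \<Rightarrow> real \<Rightarrow> real" where
  "E WA WB lR lI kR kI K =
     (if kR = 0 then
          sqrt ((INF \<beta>\<in>WB. (\<beta> * kI + lI)\<^sup>2) + (INF \<alpha>\<in>WA. (\<alpha> - lR)\<^sup>2))
        else
          (let Bs = {\<beta>. (bdd_below WA \<longrightarrow> Inf WA \<le> kR * \<beta> + lR) \<and>
                        (bdd_above WA \<longrightarrow> kR * \<beta> + lR \<le> Sup WA)};
               binf = closest (closure WB) (- (kI * lI - kR * (Inf WA - lR)) / K);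
               bsup = closest (closure WB) (- (kI * lI - kR * (Sup WA - lR)) / K);
               bop = closest (Bs \<inter> closure WB) (- lI / kI);
               Om' = (if bdd_below WA then {(Inf WA, binf)} else {})
                   \<union> (if bdd_above WA then {(Sup WA, bsup)} else {})
                   \<union> (if Bs \<inter> closure WB = {} then {} else {(bop * kR + lR, bop)})
           in INF p\<in>Om'. sqrt ((snd p * kI + lI)\<^sup>2 + (fst p - kR * snd p - lR)\<^sup>2)))"

lemma eps0_E: "eps0 c d WA WB \<omega> = E WA WB (Re (\<omega>\<^sup>2)) (Im (\<omega>\<^sup>2)) (Re (kappa c d \<omega>)) (Im (kappa c d \<omega>))
   ((Re (kappa c d \<omega>))\<^sup>2 + (Im (kappa c d \<omega>))\<^sup>2)"
  by (simp add: eps0_def E_def Let_def cmod_power2)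

lemma closest_prop:
  fixes S :: "real set"
  assumes "closed S" "S \<noteq> {}"
  shows "closest S t \<in> S \<and> (\<forall>b'\<in>S. \<bar>closest S t - t\<bar> \<le> \<bar>b' - t\<bar>)"
proof -
  obtain x where x: "x \<in> S" "\<And>y. y \<in> S \<Longrightarrow> dist t x \<le> dist t y"
    using distance_attains_inf[OF assms, of t] by blast
  have "\<exists>b. b \<in> S \<and> (\<forall>b'\<in>S. \<bar>b - t\<bar> \<le> \<bar>b' - t\<bar>)"
    using x by (intro exI[of _ x]) (auto simp: dist_real_def abs_minus_commute)
  then show ?thesis unfolding closest_def by (rule someI_ex)
qed

lemma q_min:
  fixes X :: "real set" and kR kI lI lR I \<beta> :: real
  assumes kR: "kR \<noteq> 0" and X: "closed X" "X \<noteq> {}" "\<beta> \<in> X"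
  defines "b \<equiv> closest X (- (kI * lI - kR * (I - lR)) / (kR\<^sup>2 + kI\<^sup>2))"
  shows "(b * kI + lI)\<^sup>2 + (I - kR * b - lR)\<^sup>2 \<le> (\<beta> * kI + lI)\<^sup>2 + (I - kR * \<beta> - lR)\<^sup>2"
proof -
  define K where "K = kR\<^sup>2 + kI\<^sup>2"
  define v where "v = - (kI * lI - kR * (I - lR)) / K"
  have K: "K > 0" using kR unfolding K_def by (simp add: add_pos_nonneg)
  have Kv: "K * v = - (kI * lI - kR * (I - lR))" using K unfolding v_def by simp
  have q: "(x * kI + lI)\<^sup>2 + (I - kR * x - lR)\<^sup>2 = K * (x - v)\<^sup>2 + (lI\<^sup>2 + (I - lR)\<^sup>2 - (K * v) * v)" for x
  proof -
    have "(x * kI + lI)\<^sup>2 + (I - kR * x - lR)\<^sup>2 = K * x\<^sup>2 + 2 * (kI * lI - kR * (I - lR)) * x + lI\<^sup>2 + (I - lR)\<^sup>2"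
      unfolding K_def by (simp add: power2_eq_square algebra_simps)
    also have "\<dots> = K * x\<^sup>2 - 2 * (K * v) * x + lI\<^sup>2 + (I - lR)\<^sup>2" unfolding Kv by (simp add: algebra_simps)
    finally have "(x * kI + lI)\<^sup>2 + (I - kR * x - lR)\<^sup>2 = K * x\<^sup>2 - 2 * (K * v) * x + lI\<^sup>2 + (I - lR)\<^sup>2" .
    moreover have "K * (x - v)\<^sup>2 = K * x\<^sup>2 - 2 * (K * v) * x + (K * v) * v"
      by (simp add: power2_eq_square algebra_simps)
    ultimately show ?thesis by simp
  qed
  have bc: "\<bar>b - v\<bar> \<le> \<bar>\<beta> - v\<bar>"
    using closest_prop[OF X(1,2), of v] X(3) unfolding b_def v_def K_def by blast
  then have "(b - v)\<^sup>2 \<le> (\<beta> - v)\<^sup>2" by (simp add: abs_le_square_iff)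
  then have "K * (b - v)\<^sup>2 \<le> K * (\<beta> - v)\<^sup>2" using K by simp
  then show ?thesis unfolding q by simp
qed

lemma E_lower:
  fixes WA WB :: "real set"
  assumes WA: "WA \<noteq> {}" and WB: "WB \<noteq> {}" "bounded WB" and \<alpha>: "\<alpha> \<in> WA" and \<beta>: "\<beta> \<in> WB"
  shows "E WA WB lR lI kR kI (kR\<^sup>2 + kI\<^sup>2) \<le> sqrt ((\<beta> * kI + lI)\<^sup>2 + (\<alpha> - kR * \<beta> - lR)\<^sup>2)"
proof (cases "kR = 0")
  case True
  have "(INF \<beta>\<in>WB. (\<beta> * kI + lI)\<^sup>2) \<le> (\<beta> * kI + lI)\<^sup>2"
    by (rule cINF_lower[OF _ \<beta>]) (auto intro: bdd_belowI[of _ 0])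
  moreover have "(INF \<alpha>\<in>WA. (\<alpha> - lR)\<^sup>2) \<le> (\<alpha> - lR)\<^sup>2"
    by (rule cINF_lower[OF _ \<alpha>]) (auto intro: bdd_belowI[of _ 0])
  ultimately show ?thesis using True by (simp add: E_def)
next
  case False
  define K where "K = kR\<^sup>2 + kI\<^sup>2"
  define Bs where "Bs = {\<beta>. (bdd_below WA \<longrightarrow> Inf WA \<le> kR * \<beta> + lR) \<and>
                        (bdd_above WA \<longrightarrow> kR * \<beta> + lR \<le> Sup WA)}"
  define binf where "binf = closest (closure WB) (- (kI * lI - kR * (Inf WA - lR)) / K)"
  define bsup where "bsup = closest (closure WB) (- (kI * lI - kR * (Sup WA - lR)) / K)"
  define bop where "bop = closest (Bs \<inter> closure WB) (- lI / kI)"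
  define Om where "Om = (if bdd_below WA then {(Inf WA, binf)} else {})
                   \<union> (if bdd_above WA then {(Sup WA, bsup)} else {})
                   \<union> (if Bs \<inter> closure WB = {} then {} else {(bop * kR + lR, bop)})"
  define val where "val = (\<lambda>p::real\<times>real. sqrt ((snd p * kI + lI)\<^sup>2 + (fst p - kR * snd p - lR)\<^sup>2))"
  have Eeq: "E WA WB lR lI kR kI (kR\<^sup>2 + kI\<^sup>2) = (INF p\<in>Om. val p)"
    using False unfolding E_def Let_def Om_def Bs_def binf_def bsup_def bop_def val_def K_def by simp
  have fin: "finite Om" unfolding Om_def by simp
  have bdd: "bdd_below (val ` Om)" using fin by (simp add: bdd_below_finite)  
  have cWB: "closed (closure WB)" "closure WB \<noteq> {}" using WB by auto
  have "\<exists>p\<in>Om. val p \<le> sqrt ((\<beta> * kI + lI)\<^sup>2 + (\<alpha> - kR * \<beta> - lR)\<^sup>2)"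
  proof (cases "\<beta> \<in> Bs")
    case True
    then have ne: "Bs \<inter> closure WB \<noteq> {}" using \<beta> closure_subset by blast
    have cl: "closed (Bs \<inter> closure WB)"
    proof -
      have "closed Bs" unfolding Bs_def
        by (intro closed_Collect_conj closed_Collect_imp) (auto intro!: closed_Collect_le continuous_intros)
      then show ?thesis by auto
    qed
    have bopc: "\<bar>bop - (- lI / kI)\<bar> \<le> \<bar>\<beta> - (- lI / kI)\<bar>"
      using closest_prop[OF cl ne, of "- lI / kI"] True \<beta> closure_subset unfolding bop_def by blast
    have "\<bar>bop * kI + lI\<bar> \<le> \<bar>\<beta> * kI + lI\<bar>"
    proof (cases "kI = 0")
      case True then show ?thesis by simp
    next
      case False
      have "bop * kI + lI = kI * (bop - (- lI / kI))" "\<beta> * kI + lI = kI * (\<beta> - (- lI / kI))"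
        using False by (simp_all add: field_simps)
      then show ?thesis using bopc by (simp add: abs_mult mult_left_mono)
    qed
    then have "(bop * kI + lI)\<^sup>2 \<le> (\<beta> * kI + lI)\<^sup>2" by (simp add: abs_le_square_iff)
    then have "val (bop * kR + lR, bop) \<le> sqrt ((\<beta> * kI + lI)\<^sup>2 + (\<alpha> - kR * \<beta> - lR)\<^sup>2)"
      unfolding val_def by (intro real_sqrt_le_mono) (simp add: add_increasing2)
    moreover have "(bop * kR + lR, bop) \<in> Om" using ne unfolding Om_def by simp
    ultimately show ?thesis by blast
  next
    case nB: False
    then consider "bdd_below WA" "kR * \<beta> + lR < Inf WA" | "bdd_above WA" "Sup WA < kR * \<beta> + lR"
      unfolding Bs_def by force
    then show ?thesis
    proof cases
      case 1
      have ai: "Inf WA \<le> \<alpha>" using cInf_lower[OF \<alpha> 1(1)] .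
      have q: "(binf * kI + lI)\<^sup>2 + (Inf WA - kR * binf - lR)\<^sup>2 \<le> (\<beta> * kI + lI)\<^sup>2 + (Inf WA - kR * \<beta> - lR)\<^sup>2"
        unfolding binf_def K_def by (rule q_min[OF False cWB]) (use \<beta> closure_subset in blast)
      have "(Inf WA - kR * \<beta> - lR)\<^sup>2 \<le> (\<alpha> - kR * \<beta> - lR)\<^sup>2"
        using ai 1(2) by (intro power_mono) auto
      then have "val (Inf WA, binf) \<le> sqrt ((\<beta> * kI + lI)\<^sup>2 + (\<alpha> - kR * \<beta> - lR)\<^sup>2)"
        unfolding val_def using q by simp
      moreover have "(Inf WA, binf) \<in> Om" using 1 unfolding Om_def by simp
      ultimately show ?thesis by blast
    next
      case 2
      have ai: "\<alpha> \<le> Sup WA" using cSup_upper[OF \<alpha> 2(1)] .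
      have q: "(bsup * kI + lI)\<^sup>2 + (Sup WA - kR * bsup - lR)\<^sup>2 \<le> (\<beta> * kI + lI)\<^sup>2 + (Sup WA - kR * \<beta> - lR)\<^sup>2"
        unfolding bsup_def K_def by (rule q_min[OF False cWB]) (use \<beta> closure_subset in blast)
      have "(Sup WA - kR * \<beta> - lR)\<^sup>2 \<le> (\<alpha> - kR * \<beta> - lR)\<^sup>2"
        using ai 2(2) by (simp add: abs_le_square_iff[symmetric])
      then have "val (Sup WA, bsup) \<le> sqrt ((\<beta> * kI + lI)\<^sup>2 + (\<alpha> - kR * \<beta> - lR)\<^sup>2)"
        unfolding val_def using q by simp
      moreover have "(Sup WA, bsup) \<in> Om" using 2 unfolding Om_def by simp
      ultimately show ?thesis by blast
    qed
  qed
  then obtain p where "p \<in> Om" "val p \<le> sqrt ((\<beta> * kI + lI)\<^sup>2 + (\<alpha> - kR * \<beta> - lR)\<^sup>2)" by blast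
  then show ?thesis unfolding Eeq by (meson bdd cINF_lower order_trans)
qed


lemma small_sq: "(x::real)\<^sup>2 < e\<^sup>2 \<Longrightarrow> e > 0 \<Longrightarrow> \<bar>x\<bar> < e"
proof (rule ccontr)
  assume "(x::real)\<^sup>2 < e\<^sup>2" "e > 0" "\<not> \<bar>x\<bar> < e"
  then have "e\<^sup>2 \<le> \<bar>x\<bar>\<^sup>2" by (intro power_mono) auto
  then show False using \<open>x\<^sup>2 < e\<^sup>2\<close> by simp
qed

lemma E_pos:
  fixes WA WB :: "real set"
  assumes WA: "WA \<noteq> {}" "is_interval WA" and WB: "WB \<noteq> {}" "bounded WB"
    and nz: "\<And>\<alpha> \<beta>. \<alpha> \<in> closure WA \<Longrightarrow> \<beta> \<in> closure WB \<Longrightarrow> (\<beta> * kI + lI)\<^sup>2 + (\<alpha> - kR * \<beta> - lR)\<^sup>2 \<noteq> 0"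
  shows "E WA WB lR lI kR kI (kR\<^sup>2 + kI\<^sup>2) > 0"
proof (cases "kR = 0")
  case True
  define Ib where "Ib = (INF \<beta>\<in>WB. (\<beta> * kI + lI)\<^sup>2)"
  define Ia where "Ia = (INF \<alpha>\<in>WA. (\<alpha> - lR)\<^sup>2)"
  have bb: "bdd_below ((\<lambda>\<beta>. (\<beta> * kI + lI)\<^sup>2) ` WB)" by (auto intro: bdd_belowI[of _ 0])
  have ba: "bdd_below ((\<lambda>\<alpha>. (\<alpha> - lR)\<^sup>2) ` WA)" by (auto intro: bdd_belowI[of _ 0])
  have Ib0: "Ib \<ge> 0" unfolding Ib_def using WB by (intro cINF_greatest) auto
  have Ia0: "Ia \<ge> 0" unfolding Ia_def using WA by (intro cINF_greatest) auto
  have "Ib + Ia > 0"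
  proof (rule ccontr)
    assume "\<not> Ib + Ia > 0"
    then have z: "Ib = 0" "Ia = 0" using Ib0 Ia0 by auto
    have lRc: "lR \<in> closure WA"
      unfolding closure_approachable
    proof (intro allI impI)
      fix e :: real assume e: "e > 0"
      have "Ia < e\<^sup>2" using z e by simp
      then obtain \<alpha> where "\<alpha> \<in> WA" "(\<alpha> - lR)\<^sup>2 < e\<^sup>2"
        unfolding Ia_def using cINF_less_iff[OF WA(1) ba] by blast
      then show "\<exists>y\<in>WA. dist y lR < e" using small_sq[of "\<alpha> - lR" e] e by (auto simp: dist_real_def)
    qed
    obtain \<beta>0 where b0: "\<beta>0 \<in> closure WB" "\<beta>0 * kI + lI = 0"
    proof (cases "kI = 0")
      case True
      then have "Ib = lI\<^sup>2" unfolding Ib_def using WB by simp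
      then have "lI = 0" using z by simp
      obtain b where b: "b \<in> WB" using WB(1) by blast
      have "b \<in> closure WB" using b closure_subset[of WB] by blast
      then show ?thesis using that[of b] \<open>lI = 0\<close> True by simp
    next
      case False
      have "- lI / kI \<in> closure WB"
        unfolding closure_approachable
      proof (intro allI impI)
        fix e :: real assume e: "e > 0"
        have "Ib < (e * \<bar>kI\<bar>)\<^sup>2" using z e False by simp
        then obtain \<beta> where \<beta>: "\<beta> \<in> WB" "(\<beta> * kI + lI)\<^sup>2 < (e * \<bar>kI\<bar>)\<^sup>2"
          unfolding Ib_def using cINF_less_iff[OF WB(1) bb] by blast
        then have "\<bar>\<beta> * kI + lI\<bar> < e * \<bar>kI\<bar>" using small_sq e False by simp
        moreover have "\<beta> * kI + lI = kI * (\<beta> - (- lI / kI))" using False by (simp add: field_simps)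
        ultimately have "\<bar>kI\<bar> * \<bar>\<beta> - (- lI / kI)\<bar> < \<bar>kI\<bar> * e" by (simp add: abs_mult mult.commute)
        then have "\<bar>\<beta> - (- lI / kI)\<bar> < e" using False by simp
        then show "\<exists>y\<in>WB. dist y (- lI / kI) < e" using \<beta>(1) by (auto simp: dist_real_def)
      qed
      then show ?thesis using that False by (simp add: field_simps)
    qed
    show False using nz[OF lRc b0(1)] b0(2) True by simp
  qed
  then show ?thesis using True by (simp add: E_def Ib_def Ia_def)
next
  case False
  define K where "K = kR\<^sup>2 + kI\<^sup>2"
  define Bs where "Bs = {\<beta>. (bdd_below WA \<longrightarrow> Inf WA \<le> kR * \<beta> + lR) \<and>
                        (bdd_above WA \<longrightarrow> kR * \<beta> + lR \<le> Sup WA)}"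
  define binf where "binf = closest (closure WB) (- (kI * lI - kR * (Inf WA - lR)) / K)"
  define bsup where "bsup = closest (closure WB) (- (kI * lI - kR * (Sup WA - lR)) / K)"
  define bop where "bop = closest (Bs \<inter> closure WB) (- lI / kI)"
  define Om where "Om = (if bdd_below WA then {(Inf WA, binf)} else {})
                   \<union> (if bdd_above WA then {(Sup WA, bsup)} else {})
                   \<union> (if Bs \<inter> closure WB = {} then {} else {(bop * kR + lR, bop)})"
  define val where "val = (\<lambda>p::real\<times>real. sqrt ((snd p * kI + lI)\<^sup>2 + (fst p - kR * snd p - lR)\<^sup>2))"
  have Eeq: "E WA WB lR lI kR kI (kR\<^sup>2 + kI\<^sup>2) = (INF p\<in>Om. val p)"
    using False unfolding E_def Let_def Om_def Bs_def binf_def bsup_def bop_def val_def K_def by simp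
  have fin: "finite Om" unfolding Om_def by simp
  have cWB: "closed (closure WB)" "closure WB \<noteq> {}" using WB by auto
  have cl: "closed (Bs \<inter> closure WB)"
  proof -
    have "closed Bs" unfolding Bs_def
      by (intro closed_Collect_conj closed_Collect_imp) (auto intro!: closed_Collect_le continuous_intros)
    then show ?thesis by auto
  qed
  have ne: "Om \<noteq> {}"
  proof -
    have "Bs \<inter> closure WB \<noteq> {}" if "\<not> bdd_below WA" "\<not> bdd_above WA"
      using that cWB(2) unfolding Bs_def by simp
    then show ?thesis unfolding Om_def by auto
  qed
  have ciWA: "is_interval (closure WA)"
    using WA(2) by (simp add: is_interval_connected_1 connected_imp_connected_closure)
  have inO: "fst p \<in> closure WA \<and> snd p \<in> closure WB" if pO: "p \<in> Om" for p
  proof -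
    consider "bdd_below WA" "p = (Inf WA, binf)" | "bdd_above WA" "p = (Sup WA, bsup)"
      | "Bs \<inter> closure WB \<noteq> {}" "p = (bop * kR + lR, bop)"
      using pO unfolding Om_def by (auto split: if_splits)
    then show ?thesis
    proof cases
      case 1 then show ?thesis using closure_contains_Inf[OF WA(1)] closest_prop[OF cWB] unfolding binf_def by auto
    next
      case 2 then show ?thesis using closure_contains_Sup[OF WA(1)] closest_prop[OF cWB] unfolding bsup_def by auto
    next
      case 3
      have bop: "bop \<in> Bs" "bop \<in> closure WB" using closest_prop[OF cl 3(1)] unfolding bop_def by auto
      define a where "a = bop * kR + lR"
      obtain lo where lo: "lo \<in> closure WA" "lo \<le> a"
      proof (cases "bdd_below WA")
        case True
        then show ?thesis using that closure_contains_Inf[OF WA(1) True] bop(1) unfolding Bs_def a_def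
          by (auto simp: mult.commute)
      next
        case False
        then obtain x where "x \<in> WA" "x < a" unfolding bdd_below_def by (auto simp: not_le)
        then show ?thesis using that closure_subset by force
      qed
      obtain hi where hi: "hi \<in> closure WA" "a \<le> hi"
      proof (cases "bdd_above WA")
        case True
        then show ?thesis using that closure_contains_Sup[OF WA(1) True] bop(1) unfolding Bs_def a_def
          by (auto simp: mult.commute)
      next
        case False
        then obtain x where "x \<in> WA" "a < x" unfolding bdd_above_def by (auto simp: not_le)
        then show ?thesis using that closure_subset by force
      qed
      have "a \<in> closure WA" using ciWA lo hi unfolding is_interval_1 by blast
      then show ?thesis using 3 bop unfolding a_def by simp
    qed
  qed
  have "\<forall>x\<in>val ` Om. 0 < x"
  proof
    fix x assume "x \<in> val ` Om"
    then obtain p where p: "p \<in> Om" "x = val p" by blast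
    have "(snd p * kI + lI)\<^sup>2 + (fst p - kR * snd p - lR)\<^sup>2 \<noteq> 0" using inO[OF p(1)] nz by blast
    moreover have "(snd p * kI + lI)\<^sup>2 + (fst p - kR * snd p - lR)\<^sup>2 \<ge> 0" by simp
    ultimately have "(snd p * kI + lI)\<^sup>2 + (fst p - kR * snd p - lR)\<^sup>2 > 0" by linarith
    then show "0 < x" unfolding p val_def by (rule real_sqrt_gt_zero)
  qed
  then show ?thesis unfolding Eeq using finite_less_Inf_iff[of "val ` Om" 0] fin ne by simp
qed



locale hs =
  fixes J :: "'a::{real_normed_vector,complete_space} \<Rightarrow> 'a" and ip :: "'a \<Rightarrow> 'a \<Rightarrow> complex"
  assumes H: "hilbert_space J ip"
begin

lemma J_lin: "linear J" and JJ: "J (J x) = - x"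
  and ip_addL: "ip (x + y) z = ip x z + ip y z"
  and ip_scaleL: "ip (r *\<^sub>R x) y = complex_of_real r * ip x y"
  and ip_JL: "ip (J x) y = \<i> * ip x y"
  and ip_sym: "ip y x = cnj (ip x y)"
  and ip_self: "ip x x = complex_of_real ((norm x)\<^sup>2)"
  using H unfolding hilbert_space_def by blast+

lemma ip_0L[simp]: "ip 0 y = 0"
  using ip_scaleL[of 0 0 y] by simp
lemma ip_negL: "ip (- x) y = - ip x y"
  using ip_scaleL[of "-1" x y] by simp
lemma ip_diffL: "ip (x - y) z = ip x z - ip y z"
  using ip_addL[of x "-y" z] ip_negL[of y z] by simp
lemma ip_addR: "ip x (y + z) = ip x y + ip x z"
  by (metis ip_sym ip_addL complex_cnj_add)
lemma ip_scaleR: "ip x (r *\<^sub>R y) = complex_of_real r * ip x y"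
  by (metis ip_sym ip_scaleL complex_cnj_mult complex_cnj_complex_of_real)
lemma ip_JR: "ip x (J y) = - \<i> * ip x y"
  by (metis ip_sym ip_JL complex_cnj_mult complex_cnj_i)
lemma ip_0R[simp]: "ip x 0 = 0"
  using ip_scaleR[of x 0 0] by simp
lemma ip_negR: "ip x (- y) = - ip x y"
  using ip_scaleR[of x "-1" y] by simp
lemma ip_diffR: "ip x (y - z) = ip x y - ip x z"
  using ip_addR[of x y "-z"] ip_negR[of x z] by simp

lemma J_add: "J (x + y) = J x + J y" using J_lin by (rule linear_add)
lemma J_scale: "J (r *\<^sub>R x) = r *\<^sub>R J x" using J_lin by (rule linear_scale)
lemma J_diff: "J (x - y) = J x - J y" using J_lin by (rule linear_diff)
lemma J_0[simp]: "J 0 = 0" using J_lin by (rule linear_0)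

lemma ip_scaleC_L: "ip (scaleC J a x) y = a * ip x y"
  unfolding scaleC_def ip_addL ip_scaleL ip_JL
  by (simp add: complex_eq_iff algebra_simps)
lemma ip_scaleC_R: "ip x (scaleC J a y) = cnj a * ip x y"
  by (metis ip_sym ip_scaleC_L complex_cnj_mult)

lemma Re_ip_self: "Re (ip x x) = (norm x)\<^sup>2" and Im_ip_self: "Im (ip x x) = 0"
  using ip_self[of x] by simp_all

lemma norm_J: "norm (J x) = norm x"
proof -
  have "ip (J x) (J x) = ip x x" unfolding ip_JL ip_JR by (simp add: algebra_simps)
  then have "(norm (J x))\<^sup>2 = (norm x)\<^sup>2" using Re_ip_self by metis
  then show ?thesis by simp
qed

lemma norm_scaleC: "norm (scaleC J a x) = cmod a * norm x"
proof -
  have "ip (scaleC J a x) (scaleC J a x) = (a * cnj a) * ip x x"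
    unfolding ip_scaleC_L ip_scaleC_R by (simp add: algebra_simps)
  then have "Re (ip (scaleC J a x) (scaleC J a x)) = (cmod a)\<^sup>2 * (norm x)\<^sup>2"
    using ip_self[of x] by (simp add: complex_mult_cnj cmod_power2)
  then have "(norm (scaleC J a x))\<^sup>2 = (cmod a * norm x)\<^sup>2"
    unfolding Re_ip_self by (simp add: power_mult_distrib)
  then show ?thesis by (simp add: power2_eq_iff_nonneg)
qed

lemma norm_sq_add: "(norm (x + y))\<^sup>2 = (norm x)\<^sup>2 + 2 * Re (ip x y) + (norm y)\<^sup>2"
proof -
  have "Re (ip (x + y) (x + y)) = Re (ip x x) + Re (ip x y) + Re (ip y x) + Re (ip y y)"
    unfolding ip_addL ip_addR by simp
  moreover have "Re (ip y x) = Re (ip x y)" using ip_sym[of y x] by simp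
  ultimately show ?thesis unfolding Re_ip_self by simp
qed

lemma norm_sq_diff: "(norm (x - y))\<^sup>2 = (norm x)\<^sup>2 - 2 * Re (ip x y) + (norm y)\<^sup>2"
  using norm_sq_add[of x "- y"] by (simp add: ip_negR)

lemma Re_CS: "Re (ip x y) \<le> norm x * norm y"
proof (cases "norm x * norm y = 0")
  case True
  then have "x = 0 \<or> y = 0" by simp
  then show ?thesis by auto
next
  case False
  then have pos: "norm x * norm y > 0" by (simp add: less_le)
  have "0 \<le> (norm ((norm y) *\<^sub>R x - (norm x) *\<^sub>R y))\<^sup>2" by simp
  also have "\<dots> = (norm y)\<^sup>2 * (norm x)\<^sup>2 - 2 * (norm y * norm x) * Re (ip x y) + (norm x)\<^sup>2 * (norm y)\<^sup>2"
    unfolding norm_sq_diff ip_scaleL ip_scaleR by (simp add: power_mult_distrib)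
  finally have "(norm x * norm y) * Re (ip x y) \<le> (norm x * norm y) * (norm x * norm y)"
    by (simp add: algebra_simps power2_eq_square)
  then show ?thesis using pos mult_le_cancel_left_pos by blast
qed

lemma CS: "cmod (ip x y) \<le> norm x * norm y"
proof (cases "ip x y = 0")
  case True then show ?thesis by simp
next
  case False
  define u where "u = cnj (ip x y) / cmod (ip x y)"
  have cu: "cmod u = 1" using False unfolding u_def by (simp add: norm_divide)
  have "ip (scaleC J u x) y = complex_of_real (cmod (ip x y))"
    unfolding ip_scaleC_L u_def using False
    by (simp add: complex_norm_square[symmetric] field_simps power2_eq_square)
  then have "cmod (ip x y) = Re (ip (scaleC J u x) y)" by simp
  also have "\<dots> \<le> norm (scaleC J u x) * norm y" by (rule Re_CS)
  finally show ?thesis unfolding norm_scaleC cu by simp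
qed

lemma bb_ip: "bounded_bilinear ip"
proof
  show "ip (a + a') b = ip a b + ip a' b" for a a' b by (rule ip_addL)
  show "ip a (b + b') = ip a b + ip a b'" for a b b' by (rule ip_addR)
  show "ip (r *\<^sub>R a) b = r *\<^sub>R ip a b" for r a b by (simp add: ip_scaleL scaleR_conv_of_real)
  show "ip a (r *\<^sub>R b) = r *\<^sub>R ip a b" for r a b by (simp add: ip_scaleR scaleR_conv_of_real)
  show "\<exists>K. \<forall>a b. norm (ip a b) \<le> norm a * norm b * K"
    using CS by (intro exI[of _ 1]) simp
qed

lemma bl_J: "bounded_linear J"
  using J_lin norm_J by (intro bounded_linear_intro[of _ 1]) (auto simp: J_add J_scale)

lemma bl_scaleC: "bounded_linear (scaleC J a)"
  unfolding scaleC_def[abs_def]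
  by (intro bounded_linear_add bounded_linear_scaleR_right bounded_linear_compose[OF bounded_linear_scaleR_right bl_J] bounded_linear_ident)

lemma scaleC_J: "scaleC J a (J x) = J (scaleC J a x)"
  unfolding scaleC_def by (simp add: J_add J_scale)

lemma dense_zero:
  assumes "closure D = UNIV" "\<And>x. x \<in> D \<Longrightarrow> ip x v = 0"
  shows "v = 0"
proof -
  have "v \<in> closure D" using assms(1) by simp
  then obtain f where f: "\<And>n. f n \<in> D" "f \<longlonglongrightarrow> v" unfolding closure_sequential by blast
  have "(\<lambda>n. ip (f n) v) \<longlonglongrightarrow> ip v v"
    using bounded_bilinear.tendsto[OF bb_ip f(2) tendsto_const] .
  moreover have "(\<lambda>n. ip (f n) v) = (\<lambda>n. 0)" using f(1) assms(2) by auto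
  ultimately have "ip v v = 0" using LIMSEQ_unique tendsto_const by metis
  then show ?thesis using ip_self[of v] by simp
qed

end

locale opset = hs J ip for J :: "'a::{real_normed_vector,complete_space} \<Rightarrow> 'a" and ip +
  fixes D :: "'a set" and A B :: "'a \<Rightarrow> 'a" and lam kap :: complex
  assumes SA: "selfadjoint J ip D A" and SB: "bounded_selfadjoint J ip B"
begin

definition T :: "'a \<Rightarrow> 'a" where "T x = A x - scaleC J lam x - scaleC J kap (B x)"

lemma D_sub: "subspace D" and D_J: "x \<in> D \<Longrightarrow> J x \<in> D" and D_dense: "closure D = UNIV"
  and A_add: "x \<in> D \<Longrightarrow> y \<in> D \<Longrightarrow> A (x + y) = A x + A y"
  and A_scale: "x \<in> D \<Longrightarrow> A (r *\<^sub>R x) = r *\<^sub>R A x"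
  and A_J: "x \<in> D \<Longrightarrow> A (J x) = J (A x)"
  and A_adj: "y \<in> D \<longleftrightarrow> (\<exists>z. \<forall>x\<in>D. ip (A x) y = ip x z)"
  and A_sym: "x \<in> D \<Longrightarrow> y \<in> D \<Longrightarrow> ip (A x) y = ip x (A y)"
  using SA unfolding selfadjoint_def csubspace_def clinear_on_def by blast+

lemma B_bl: "bounded_linear B" and B_J: "B (J x) = J (B x)" and B_sym: "ip (B x) y = ip x (B y)"
  using SB unfolding bounded_selfadjoint_def by blast+

lemma D_add: "x \<in> D \<Longrightarrow> y \<in> D \<Longrightarrow> x + y \<in> D" using D_sub by (rule subspace_add)
lemma D_scale: "x \<in> D \<Longrightarrow> r *\<^sub>R x \<in> D" using D_sub by (simp add: subspace_scale)
lemma D_diff: "x \<in> D \<Longrightarrow> y \<in> D \<Longrightarrow> x - y \<in> D" using D_sub by (rule subspace_diff)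
lemma D_0: "0 \<in> D" using D_sub by (rule subspace_0)

lemma A_diff: "x \<in> D \<Longrightarrow> y \<in> D \<Longrightarrow> A (x - y) = A x - A y"
  using A_add[of "x - y" y] D_diff by (metis add_diff_cancel diff_add_cancel eq_diff_eq)

lemma sC_add: "scaleC J a (x + y) = scaleC J a x + scaleC J a y"
  using bl_scaleC[of a] by (simp add: linear_add bounded_linear.linear)
lemma sC_scale: "scaleC J a (r *\<^sub>R x) = r *\<^sub>R scaleC J a x"
  using bl_scaleC[of a] by (simp add: linear_scale bounded_linear.linear)
lemma sC_diff: "scaleC J a (x - y) = scaleC J a x - scaleC J a y"
  using bl_scaleC[of a] by (simp add: linear_diff bounded_linear.linear)

lemma T_add: "x \<in> D \<Longrightarrow> y \<in> D \<Longrightarrow> T (x + y) = T x + T y"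
  unfolding T_def using A_add sC_add linear_add[OF bounded_linear.linear[OF B_bl]] by (simp add: algebra_simps)
lemma T_scale: "x \<in> D \<Longrightarrow> T (r *\<^sub>R x) = r *\<^sub>R T x"
  unfolding T_def using A_scale sC_scale linear_scale[OF bounded_linear.linear[OF B_bl]] by (simp add: algebra_simps)
lemma T_diff: assumes "x \<in> D" "y \<in> D" shows "T (x - y) = T x - T y"
  unfolding T_def A_diff[OF assms] sC_diff linear_diff[OF bounded_linear.linear[OF B_bl]] by (simp add: algebra_simps)
lemma T_J: "x \<in> D \<Longrightarrow> T (J x) = J (T x)"
  unfolding T_def using A_J scaleC_J B_J by (simp add: J_diff)

lemma ipT: "ip (T x) y = ip (A x) y - ip x (scaleC J (cnj lam) y) - ip x (scaleC J (cnj kap) (B y))"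
  unfolding T_def ip_diffL ip_scaleC_L ip_scaleC_R B_sym by simp

context
  fixes e :: real
  assumes e: "e > 0" and LB: "\<And>x. x \<in> D \<Longrightarrow> e * (norm x)\<^sup>2 \<le> cmod (ip (T x) x)"
begin

lemma nb: "x \<in> D \<Longrightarrow> e * norm x \<le> norm (T x)"
proof -
  assume x: "x \<in> D"
  have "e * (norm x)\<^sup>2 \<le> norm (T x) * norm x" using LB[OF x] CS[of "T x" x] by linarith
  then show ?thesis
    by (cases "norm x = 0") (auto simp: power2_eq_square mult.assoc[symmetric] mult_le_cancel_right)
qed

lemma orth_zero:
  assumes orth: "\<And>x. x \<in> D \<Longrightarrow> ip (T x) v = 0"
  shows "v = 0"
proof -
  define z where "z = scaleC J (cnj lam) v + scaleC J (cnj kap) (B v)"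
  have 1: "ip (A x) v = ip x z" if "x \<in> D" for x
    using orth[OF that] unfolding ipT z_def ip_addR by (simp add: algebra_simps)
  then have vD: "v \<in> D" using A_adj by blast
  have "ip x (A v - z) = 0" if "x \<in> D" for x
    using 1[OF that] A_sym[OF that vD] by (simp add: ip_diffR)
  then have "A v - z = 0" using dense_zero[OF D_dense] by blast
  then have Av: "A v = z" by simp
  have "ip (T v) v = 0" using orth[OF vD] .
  have "e * (norm v)\<^sup>2 \<le> 0" using LB[OF vD] orth[OF vD] by simp
  then show ?thesis using e by (simp add: mult_le_0_iff)
qed


lemma T_inj: "inj_on T D"
proof (rule inj_onI)
  fix x y assume xy: "x \<in> D" "y \<in> D" "T x = T y"
  have "e * norm (x - y) \<le> norm (T (x - y))" using nb D_diff xy by blast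
  then have "e * norm (x - y) \<le> 0" using T_diff xy by simp
  then show "x = y" using e by (simp add: mult_le_0_iff)
qed

lemma closed_range:
  assumes f: "\<And>n. f n \<in> D" and lim: "(\<lambda>n. T (f n)) \<longlonglongrightarrow> y"
  shows "\<exists>x\<in>D. T x = y"
proof -
  have "Cauchy (\<lambda>n. T (f n))" using lim by (rule LIMSEQ_imp_Cauchy)
  have "Cauchy f"
  proof (rule metric_CauchyI)
    fix r :: real assume r: "r > 0"
    obtain M where M: "\<And>m n. m \<ge> M \<Longrightarrow> n \<ge> M \<Longrightarrow> dist (T (f m)) (T (f n)) < e * r"
      using metric_CauchyD[OF \<open>Cauchy (\<lambda>n. T (f n))\<close>, of "e * r"] e r by auto
    show "\<exists>M. \<forall>m\<ge>M. \<forall>n\<ge>M. dist (f m) (f n) < r"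
    proof (intro exI allI impI)
      fix m n assume "m \<ge> M" "n \<ge> M"
      then have "norm (T (f m) - T (f n)) < e * r" using M by (simp add: dist_norm)
      moreover have "e * norm (f m - f n) \<le> norm (T (f m) - T (f n))"
        using nb[OF D_diff[OF f f]] T_diff[OF f f] by simp
      ultimately have "e * norm (f m - f n) < e * r" by linarith
      then show "dist (f m) (f n) < r" using e by (simp add: dist_norm)
    qed
  qed
  then obtain x where fx: "f \<longlonglongrightarrow> x" using Cauchy_convergent_iff convergent_def by blast
  define w where "w = y + scaleC J lam x + scaleC J kap (B x)"
  have Af: "A (f n) = T (f n) + scaleC J lam (f n) + scaleC J kap (B (f n))" for n
    unfolding T_def by simp
  have Alim: "(\<lambda>n. A (f n)) \<longlonglongrightarrow> w"
    unfolding Af w_def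
    by (intro tendsto_add lim bounded_linear.tendsto[OF bl_scaleC] bounded_linear.tendsto[OF B_bl] fx)
  have 1: "ip (A z) x = ip z w" if z: "z \<in> D" for z
  proof -
    have "(\<lambda>n. ip (A z) (f n)) \<longlonglongrightarrow> ip (A z) x"
      by (rule bounded_bilinear.tendsto[OF bb_ip tendsto_const fx])
    moreover have "(\<lambda>n. ip (A z) (f n)) = (\<lambda>n. ip z (A (f n)))" using A_sym[OF z f] by simp
    moreover have "(\<lambda>n. ip z (A (f n))) \<longlonglongrightarrow> ip z w"
      by (rule bounded_bilinear.tendsto[OF bb_ip tendsto_const Alim])
    ultimately show ?thesis using LIMSEQ_unique by metis
  qed
  then have xD: "x \<in> D" using A_adj by blast
  have "ip z (A x - w) = 0" if "z \<in> D" for z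
    using 1[OF that] A_sym[OF that xD] by (simp add: ip_diffR)
  then have "A x - w = 0" using dense_zero[OF D_dense] by blast
  then have "T x = y" unfolding T_def w_def by (simp add: algebra_simps)
  then show ?thesis using xD by blast
qed

lemma var_zero:
  fixes p q :: real
  assumes q: "q \<ge> 0" and h: "\<And>t. 2 * t * p \<le> t\<^sup>2 * q"
  shows "p = 0"
proof (rule ccontr)
  assume p: "p \<noteq> 0"
  define t where "t = p / (q + 1)"
  have q1: "q + 1 \<noteq> 0" using q by simp
  have hh: "(2 * t * p) * (q+1)\<^sup>2 \<le> (t\<^sup>2 * q) * (q+1)\<^sup>2" by (rule mult_right_mono[OF h]) simp
  have tq: "t * (q + 1) = p" unfolding t_def using q1 by simp
  have e1: "(2 * t * p) * (q+1)\<^sup>2 = 2 * p * (t * (q + 1)) * (q + 1)" by (simp add: power2_eq_square algebra_simps)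
  have e2: "(t\<^sup>2 * q) * (q+1)\<^sup>2 = (t * (q + 1))\<^sup>2 * q" by (simp add: power2_eq_square algebra_simps)
  have "2 * p * (t * (q + 1)) * (q + 1) \<le> (t * (q + 1))\<^sup>2 * q" using hh unfolding e1 e2 .
  then have "2 * p\<^sup>2 * (q + 1) \<le> p\<^sup>2 * q" unfolding tq by (simp add: power2_eq_square)
  moreover have "p\<^sup>2 > 0" using p by simp
  ultimately have "p\<^sup>2 * (2 * (q + 1)) \<le> p\<^sup>2 * q \<and> p\<^sup>2 > 0" by (simp add: algebra_simps)
  then have "2 * (q + 1) \<le> q" using mult_le_cancel_left_pos by blast
  then show False using q by (simp add: algebra_simps)
qed

lemma T_surj: "T ` D = UNIV"
proof -
  have "y \<in> T ` D" for y
  proof -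
    define \<delta> where "\<delta> = (INF z\<in>D. norm (y - T z))"
    have bdd: "bdd_below ((\<lambda>z. norm (y - T z)) ` D)" by (auto intro: bdd_belowI[of _ 0])
    have Dne: "D \<noteq> {}" using D_0 by blast
    have dle: "\<delta> \<le> norm (y - T z)" if "z \<in> D" for z
      unfolding \<delta>_def using bdd that by (rule cINF_lower)
    have d0: "\<delta> \<ge> 0" unfolding \<delta>_def using Dne by (intro cINF_greatest) auto
    have "\<exists>z\<in>D. (norm (y - T z))\<^sup>2 < \<delta>\<^sup>2 + 1 / (Suc n)" for n
    proof -
      define X where "X = \<delta>\<^sup>2 + 1 / Suc n"
      have X0: "X \<ge> 0" unfolding X_def by simp
      have "\<delta>\<^sup>2 < X" unfolding X_def by simp
      then have "\<delta> < sqrt X" by (rule real_less_rsqrt)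
      then obtain z where z: "z \<in> D" "norm (y - T z) < sqrt X"
        unfolding \<delta>_def using cINF_less_iff[OF Dne bdd] by blast
      then have "(norm (y - T z))\<^sup>2 < (sqrt X)\<^sup>2"
        by (intro power_strict_mono) auto
      then have "(norm (y - T z))\<^sup>2 < X" using real_sqrt_pow2[OF X0] by simp
      then have "(norm (y - T z))\<^sup>2 < \<delta>\<^sup>2 + 1 / Suc n" unfolding X_def .
      then show ?thesis using z by blast
    qed
    then obtain f where f: "\<And>n. f n \<in> D" "\<And>n. (norm (y - T (f n)))\<^sup>2 < \<delta>\<^sup>2 + 1 / (Suc n)"
      by metis
    have par: "(norm (T (f m) - T (f n)))\<^sup>2 < 2 / Suc m + 2 / Suc n" for m n
    proof -
      define a where "a = y - T (f m)"
      define b where "b = y - T (f n)"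
      have h: "(1/2::real) *\<^sub>R (f m + f n) \<in> D" using f D_add D_scale by blast
      have "a + b = 2 *\<^sub>R (y - T ((1/2::real) *\<^sub>R (f m + f n)))"
        unfolding a_def b_def T_scale[OF D_add[OF f(1) f(1)]] T_add[OF f(1) f(1)]
        by (simp add: algebra_simps scaleR_2)
      then have "norm (a + b) = 2 * norm (y - T ((1/2::real) *\<^sub>R (f m + f n)))" by simp
      then have "norm (a + b) \<ge> 2 * \<delta>" using dle[OF h] by simp
      then have "(2 * \<delta>)\<^sup>2 \<le> (norm (a + b))\<^sup>2" using d0 by (intro power_mono) auto
      then have ab: "(norm (a + b))\<^sup>2 \<ge> 4 * \<delta>\<^sup>2" by (simp add: power_mult_distrib)
      have pl: "(norm (a - b))\<^sup>2 + (norm (a + b))\<^sup>2 = 2 * (norm a)\<^sup>2 + 2 * (norm b)\<^sup>2"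
        unfolding norm_sq_add norm_sq_diff by simp
      have "a - b = T (f n) - T (f m)" unfolding a_def b_def by simp
      then have "(norm (a - b))\<^sup>2 = (norm (T (f m) - T (f n)))\<^sup>2" by (simp add: norm_minus_commute)
      moreover have "2 / real (Suc m) = 2 * (1 / real (Suc m))" "2 / real (Suc n) = 2 * (1 / real (Suc n))" by simp_all
      ultimately show ?thesis using pl ab f(2)[of m] f(2)[of n] unfolding a_def b_def by linarith
    qed
    have "Cauchy (\<lambda>n. T (f n))"
    proof (rule metric_CauchyI)
      fix r :: real assume r: "r > 0"
      obtain N :: nat where N: "4 / r\<^sup>2 < N" using reals_Archimedean2 by blast
      show "\<exists>M. \<forall>m\<ge>M. \<forall>n\<ge>M. dist (T (f m)) (T (f n)) < r"
      proof (intro exI allI impI)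
        fix m n assume mn: "m \<ge> N" "n \<ge> N"
        have r2: "r\<^sup>2 > 0" using r by simp
        have "2 / real (Suc m) \<le> 2 / Suc N" "2 / real (Suc n) \<le> 2 / Suc N"
          using mn by (simp_all add: frac_le)
        moreover have "4 / real (Suc N) < r\<^sup>2"
        proof -
          have "4 / r\<^sup>2 < Suc N" using N by simp
          then show ?thesis using r2 by (simp add: field_simps)
        qed
        ultimately have "(norm (T (f m) - T (f n)))\<^sup>2 < r\<^sup>2" using par[of m n] by linarith
        then show "dist (T (f m)) (T (f n)) < r" using r by (simp add: dist_norm power_less_imp_less_base)
      qed
    qed
    then obtain r where rl: "(\<lambda>n. T (f n)) \<longlonglongrightarrow> r" using Cauchy_convergent_iff convergent_def by blast
    obtain x where x: "x \<in> D" "T x = r" using closed_range[OF f(1) rl] by blast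
    have xmin: "norm (y - T x) \<le> norm (y - T z)" if "z \<in> D" for z
    proof -
      have "(\<lambda>n. (norm (y - T (f n)))\<^sup>2) \<longlonglongrightarrow> (norm (y - r))\<^sup>2"
        by (intro tendsto_intros rl)
      moreover have "(\<lambda>n. \<delta>\<^sup>2 + 1 / Suc n) \<longlonglongrightarrow> \<delta>\<^sup>2 + 0"
        using LIMSEQ_inverse_real_of_nat by (intro tendsto_intros) (simp add: inverse_eq_divide)
      ultimately have "(norm (y - r))\<^sup>2 \<le> \<delta>\<^sup>2 + 0"
        using f(2) by (intro LIMSEQ_le[of _ _ _ ]) (auto intro: less_imp_le)
      then have "norm (y - r) \<le> \<delta>" using d0 by (simp add: power2_le_iff_abs_le)
      then show ?thesis using dle[OF that] x(2) by simp
    qed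
    define v where "v = y - T x"
    have reZ: "Re (ip v (T u)) = 0" if u: "u \<in> D" for u
    proof (rule var_zero[of "(norm (T u))\<^sup>2"])
      fix t :: real
      have "norm v \<le> norm (v - t *\<^sub>R T u)"
        using xmin[OF D_add[OF x(1) D_scale[OF u]]] T_add[OF x(1) D_scale[OF u]] T_scale[OF u]
        unfolding v_def by (simp add: algebra_simps)
      then have "(norm v)\<^sup>2 \<le> (norm (v - t *\<^sub>R T u))\<^sup>2" by (simp add: power_mono)
      then show "2 * t * Re (ip v (T u)) \<le> t\<^sup>2 * (norm (T u))\<^sup>2"
        unfolding norm_sq_diff ip_scaleR by (simp add: power_mult_distrib)
    qed simp
    have "ip (T u) v = 0" if u: "u \<in> D" for u
    proof -
      have "Re (ip v (T (J u))) = 0" using reZ[OF D_J[OF u]] .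
      then have "Im (ip v (T u)) = 0" unfolding T_J[OF u] ip_JR by simp
      then have "ip v (T u) = 0" using reZ[OF u] by (simp add: complex_eq_iff)
      then show ?thesis using ip_sym[of "T u" v] by simp
    qed
    then have "v = 0" by (rule orth_zero)
    then show ?thesis using x unfolding v_def by auto
  qed
  then show ?thesis by blast
qed
end

end


lemma q_nz:
  fixes c d :: real and \<omega> :: complex
  assumes "\<omega> \<noteq> delta_plus c d" "\<omega> \<noteq> delta_minus c d"
  shows "complex_of_real c - \<i> * complex_of_real d * \<omega> - \<omega>\<^sup>2 \<noteq> 0"
proof
  assume q: "complex_of_real c - \<i> * complex_of_real d * \<omega> - \<omega>\<^sup>2 = 0"
  define r where "r = csqrt (complex_of_real (c - d\<^sup>2 / 4))"
  have r2: "r\<^sup>2 = complex_of_real (c - d\<^sup>2 / 4)" unfolding r_def by simp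
  have "(\<omega> + \<i> * complex_of_real (d / 2))\<^sup>2 = \<omega>\<^sup>2 + \<i> * complex_of_real d * \<omega> - complex_of_real (d\<^sup>2 / 4)"
    by (simp add: power2_eq_square algebra_simps)
  also have "\<dots> = complex_of_real (c - d\<^sup>2 / 4)" using q by (simp add: algebra_simps)
  finally have "(\<omega> + \<i> * complex_of_real (d / 2))\<^sup>2 = r\<^sup>2" using r2 by simp
  then have "\<omega> + \<i> * complex_of_real (d / 2) = r \<or> \<omega> + \<i> * complex_of_real (d / 2) = - r"
    by (simp add: power2_eq_iff)
  then show False using assms unfolding delta_plus_def delta_minus_def r_def[symmetric]
    by (auto simp: algebra_simps)
qed

context opset
begin

lemma ip_scale2: "ip (r *\<^sub>R u) (r *\<^sub>R v) = complex_of_real (r\<^sup>2) * ip u v"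
  unfolding ip_scaleL ip_scaleR by (simp add: power2_eq_square)

lemma real_of_cnj: "z = cnj z \<Longrightarrow> z = complex_of_real (Re z)"
proof -
  assume h: "z = cnj z"
  have "Im z = Im (cnj z)" using arg_cong[OF h, of Im] .
  then have "Im z = 0" by simp
  then show ?thesis by (simp add: complex_eq_iff)
qed

lemma A_real: "x \<in> D \<Longrightarrow> ip (A x) x = complex_of_real (Re (ip (A x) x))"
proof -
  assume x: "x \<in> D"
  have "ip (A x) x = cnj (ip (A x) x)" using A_sym[OF x x] ip_sym[of "A x" x] by simp
  then show ?thesis by (rule real_of_cnj)
qed

lemma B_real: "ip (B x) x = complex_of_real (Re (ip (B x) x))"
proof -
  have "ip (B x) x = cnj (ip (B x) x)" using B_sym[of x x] ip_sym[of "B x" x] by simp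
  then show ?thesis by (rule real_of_cnj)
qed

lemma T_unit:
  assumes "norm x = 1" and xD: "x \<in> D"
  shows "ip (T x) x = complex_of_real (Re (ip (A x) x)) - lam - kap * complex_of_real (Re (ip (B x) x))"
proof -
  have "ip (T x) x = ip (A x) x - lam * ip x x - kap * ip (B x) x"
    unfolding T_def ip_diffL ip_scaleC_L by simp
  moreover have "ip x x = 1" using ip_self[of x] assms by simp
  ultimately show ?thesis using A_real[OF xD] B_real[of x] by simp
qed

lemma LB_from_unit:
  assumes e: "e \<ge> 0" and U: "\<And>u. u \<in> D \<Longrightarrow> norm u = 1 \<Longrightarrow> e \<le> cmod (ip (T u) u)"
    and x: "x \<in> D"
  shows "e * (norm x)\<^sup>2 \<le> cmod (ip (T x) x)"
proof (cases "x = 0")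
  case True then show ?thesis by simp
next
  case False
  define u where "u = (1 / norm x) *\<^sub>R x"
  have uD: "u \<in> D" unfolding u_def using D_scale[OF x] .
  have un: "norm u = 1" unfolding u_def using False by simp
  have xu: "x = norm x *\<^sub>R u" unfolding u_def using False by simp
  have "ip (T x) x = complex_of_real ((norm x)\<^sup>2) * ip (T u) u"
    by (subst (1 2) xu) (simp add: T_scale[OF uD] ip_scale2)
  then have "cmod (ip (T x) x) = (norm x)\<^sup>2 * cmod (ip (T u) u)" by (simp add: norm_mult norm_power)
  then show ?thesis using U[OF uD un] mult_right_mono[of e "cmod (ip (T u) u)" "(norm x)\<^sup>2"] by (simp add: mult.commute)
qed

end


context opset
begin

lemma WA_interval:
  shows "is_interval (Re ` numrange ip D A)"
proof -
  define f where "f = (\<lambda>x. Re (ip (A x) x))"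
  have WA: "Re ` numrange ip D A = {f x | x. x \<in> D \<and> norm x = 1}"
    unfolding numrange_def f_def by auto
  have main: "t \<in> {f x | x. x \<in> D \<and> norm x = 1}"
    if x: "x \<in> D" "norm x = 1" and y: "y \<in> D" "norm y = 1" and t: "f x \<le> t" "t \<le> f y" for x y t
  proof (cases "\<exists>s\<in>{0..1}. (1 - s) *\<^sub>R x + s *\<^sub>R y = 0")
    case True
    then obtain s where s: "s \<in> {0..1}" "(1 - s) *\<^sub>R x + s *\<^sub>R y = 0" by blast
    have s0: "s \<noteq> 0" using s x by auto
    have "s *\<^sub>R y = - ((1 - s) *\<^sub>R x)" using s(2) by (simp add: eq_neg_iff_add_eq_0 add.commute)
    then have "norm (s *\<^sub>R y) = norm ((1 - s) *\<^sub>R x)" by simp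
    then have "s = 1 - s" using s x y by simp
    then have "y = - x" using \<open>s *\<^sub>R y = - ((1 - s) *\<^sub>R x)\<close> s0 by (metis scaleR_cancel_left scaleR_minus_right)
    then have "f y = f x" unfolding f_def using A_scale[OF x(1), of "-1"] by (simp add: ip_negL ip_negR)
    then have "t = f x" using t by simp
    then show ?thesis using x by blast
  next
    case False
    define p where "p = (\<lambda>s::real. (1 - s) *\<^sub>R x + s *\<^sub>R y)"
    have pD: "p s \<in> D" for s unfolding p_def using D_add D_scale x y by blast
    have pnz: "norm (p s) \<noteq> 0" if "s \<in> {0..1}" for s using False that unfolding p_def by auto
    define g where "g = (\<lambda>s. Re (ip ((1 - s) *\<^sub>R A x + s *\<^sub>R A y) (p s)) / (norm (p s))\<^sup>2)"
    have Ap: "A (p s) = (1 - s) *\<^sub>R A x + s *\<^sub>R A y" for s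
      unfolding p_def using A_add A_scale D_scale x y by simp
    have cont: "continuous_on {0..1} g"
      unfolding g_def p_def using pnz unfolding p_def
      by (intro continuous_intros bounded_bilinear.continuous_on[OF bb_ip] continuous_on_Re) auto
    have g0: "g 0 = f x" unfolding g_def p_def f_def using x by simp
    have g1: "g 1 = f y" unfolding g_def p_def f_def using y by simp
    obtain s where s: "s \<ge> 0" "s \<le> 1" "g s = t" using IVT'[of g 0 t 1] cont g0 g1 t by auto
    define z where "z = (1 / norm (p s)) *\<^sub>R p s"
    have zD: "z \<in> D" unfolding z_def using D_scale pD by blast
    have zn: "norm z = 1" unfolding z_def using pnz s by simp
    have "f z = Re (ip (A (p s)) (p s)) / (norm (p s))\<^sup>2"
      unfolding f_def z_def A_scale[OF pD] ip_scale2 by (simp add: power_divide)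
    also have "\<dots> = t" using s(3) unfolding g_def Ap .
    finally show ?thesis using zD zn by blast
  qed
  show ?thesis unfolding WA is_interval_1
  proof (intro ballI allI impI)
    fix a b t assume "a \<in> {f x | x. x \<in> D \<and> norm x = 1}" "b \<in> {f x | x. x \<in> D \<and> norm x = 1}"
      "a \<le> t \<and> t \<le> b"
    then obtain x y where "x \<in> D" "norm x = 1" "y \<in> D" "norm y = 1" "a = f x" "b = f y" "f x \<le> t" "t \<le> f y"
      by auto
    then show "t \<in> {f x | x. x \<in> D \<and> norm x = 1}" by (intro main) auto
  qed
qed

end

lemma cmod_bridge:
  "cmod (complex_of_real \<alpha> - lam - kap * complex_of_real \<beta>)
   = sqrt ((\<beta> * Im kap + Im lam)\<^sup>2 + (\<alpha> - Re kap * \<beta> - Re lam)\<^sup>2)"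
proof -
  have "(Re (complex_of_real \<alpha> - lam - kap * complex_of_real \<beta>))\<^sup>2 = (\<alpha> - Re kap * \<beta> - Re lam)\<^sup>2"
    by (simp add: algebra_simps)
  moreover have "(Im (complex_of_real \<alpha> - lam - kap * complex_of_real \<beta>))\<^sup>2 = (\<beta> * Im kap + Im lam)\<^sup>2"
    by (simp add: power2_eq_square algebra_simps)
  ultimately show ?thesis unfolding cmod_def by simp
qed

lemma ppoly_zero:
  assumes q: "complex_of_real c - \<i> * complex_of_real d * \<omega> - \<omega>\<^sup>2 \<noteq> 0"
    and h: "(\<beta> * Im (kappa c d \<omega>) + Im (\<omega>\<^sup>2))\<^sup>2 + (\<alpha> - Re (kappa c d \<omega>) * \<beta> - Re (\<omega>\<^sup>2))\<^sup>2 = 0"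
  shows "ppoly c d \<alpha> \<beta> \<omega> = 0"
proof -
  have h1: "\<beta> * Im (kappa c d \<omega>) + Im (\<omega>\<^sup>2) = 0" and h2: "\<alpha> - Re (kappa c d \<omega>) * \<beta> - Re (\<omega>\<^sup>2) = 0"
    using h by (simp_all add: sum_power2_eq_zero_iff)
  have z: "complex_of_real \<alpha> - \<omega>\<^sup>2 = kappa c d \<omega> * complex_of_real \<beta>"
    using h1 h2 by (simp add: complex_eq_iff algebra_simps)
  have kq: "kappa c d \<omega> * (complex_of_real c - \<i> * complex_of_real d * \<omega> - \<omega>\<^sup>2) = \<omega>\<^sup>2"
    unfolding kappa_def using q by simp
  have "ppoly c d \<alpha> \<beta> \<omega> = complex_of_real \<beta> * (kappa c d \<omega> * (complex_of_real c - \<i> * complex_of_real d * \<omega> - \<omega>\<^sup>2)) - complex_of_real \<beta> * \<omega>\<^sup>2"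
    unfolding ppoly_def z by (simp add: algebra_simps)
  then show ?thesis unfolding kq by simp
qed

theorem corollary4p6:
  fixes J :: "'a::{real_normed_vector,complete_space} \<Rightarrow> 'a"
    and ip :: "'a \<Rightarrow> 'a \<Rightarrow> complex"
    and D :: "'a set" and A B :: "'a \<Rightarrow> 'a"
    and c d :: real and \<omega> :: complex
  assumes H: "hilbert_space J ip"
    and A: "selfadjoint J ip D A"
    and B: "bounded_selfadjoint J ip B" and B0: "B \<noteq> (\<lambda>x. 0)"
    and c: "c \<ge> 0" and d: "d > 0"
    and \<omega>C: "\<omega> \<noteq> delta_plus c d" "\<omega> \<noteq> delta_minus c d"
    and \<omega>W: "\<omega> \<notin> W_Omega c d (Re ` numrange ip D A) (Re ` numrange ip UNIV B)"
  shows "bij_betw (Top J c d A B \<omega>) D UNIV \<and>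
         (\<forall>y. norm (the_inv_into D (Top J c d A B \<omega>) y)
               \<le> norm y / eps0 c d (Re ` numrange ip D A) (Re ` numrange ip UNIV B) \<omega>)"
proof -
  interpret O: opset J ip D A B "\<omega>\<^sup>2" "kappa c d \<omega>"
    by (rule opset.intro) (simp_all add: hs_def opset_axioms_def H A B)
  have Teq: "Top J c d A B \<omega> = O.T" by (rule ext) (simp add: Top_def O.T_def)
  define WA where "WA = Re ` numrange ip D A"
  define WB where "WB = Re ` numrange ip UNIV B"
  define lR where "lR = Re (\<omega>\<^sup>2)"
  define lI where "lI = Im (\<omega>\<^sup>2)"
  define kR where "kR = Re (kappa c d \<omega>)"
  define kI where "kI = Im (kappa c d \<omega>)"
  define e where "e = eps0 c d WA WB \<omega>"
  have eE: "e = E WA WB lR lI kR kI (kR\<^sup>2 + kI\<^sup>2)"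
    unfolding e_def eps0_E lR_def lI_def kR_def kI_def ..
  obtain x0 where x0B: "B x0 \<noteq> 0" using B0 by auto
  have B00: "B 0 = 0" using linear_0[OF bounded_linear.linear[OF O.B_bl]] .
  have x0: "x0 \<noteq> 0" using x0B B00 by auto
  have WBne: "WB \<noteq> {}"
  proof -
    define u where "u = (1 / norm x0) *\<^sub>R x0"
    have "norm u = 1" unfolding u_def using x0 by simp
    then show ?thesis unfolding WB_def numrange_def by blast
  qed
  obtain z where z: "z \<in> D" "z \<noteq> 0"
  proof (rule ccontr)
    assume "\<not> thesis"
    with that have "D \<subseteq> {0}" by blast
    then have "closure D \<subseteq> {0}" using closure_mono[of D "{0}"] by simp
    then show False using O.D_dense x0 by auto
  qed
  have WAne: "WA \<noteq> {}"
  proof -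
    define u where "u = (1 / norm z) *\<^sub>R z"
    have "norm u = 1" unfolding u_def using z by simp
    moreover have "u \<in> D" unfolding u_def using O.D_scale z by blast
    ultimately show ?thesis unfolding WA_def numrange_def by blast
  qed
  have WBb: "bounded WB"
  proof -
    obtain K where K: "\<And>x. norm (B x) \<le> norm x * K" using bounded_linear.bounded[OF O.B_bl] by blast
    have "\<bar>\<beta>\<bar> \<le> K" if bW: "\<beta> \<in> WB" for \<beta>
    proof -
      obtain x where x: "norm x = 1" "\<beta> = Re (ip (B x) x)" using bW unfolding WB_def numrange_def by auto
      have "\<bar>\<beta>\<bar> \<le> cmod (ip (B x) x)" using x abs_Re_le_cmod by simp
      also have "\<dots> \<le> norm (B x) * norm x" by (rule O.CS)
      also have "\<dots> \<le> K" using K[of x] x by simp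
      finally show ?thesis .
    qed
    then show ?thesis unfolding bounded_real by blast
  qed
  have WAi: "is_interval WA" unfolding WA_def by (rule O.WA_interval)
  have q: "complex_of_real c - \<i> * complex_of_real d * \<omega> - \<omega>\<^sup>2 \<noteq> 0" using q_nz[OF \<omega>C] .
  have nz: "(\<beta> * kI + lI)\<^sup>2 + (\<alpha> - kR * \<beta> - lR)\<^sup>2 \<noteq> 0"
    if "\<alpha> \<in> closure WA" "\<beta> \<in> closure WB" for \<alpha> \<beta>
  proof
    assume "(\<beta> * kI + lI)\<^sup>2 + (\<alpha> - kR * \<beta> - lR)\<^sup>2 = 0"
    then have "ppoly c d \<alpha> \<beta> \<omega> = 0" using ppoly_zero[OF q] unfolding kI_def lI_def kR_def lR_def by blast
    then have "\<omega> \<in> W_Omega c d WA WB" using that unfolding W_Omega_def by blast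
    then show False using \<omega>W unfolding WA_def WB_def by blast
  qed
  have epos: "e > 0" unfolding eE by (rule E_pos[OF WAne WAi WBne WBb nz])
  have U: "e \<le> cmod (ip (O.T u) u)" if u: "u \<in> D" "norm u = 1" for u
  proof -
    have a: "Re (ip (A u) u) \<in> WA" using u unfolding WA_def numrange_def by blast
    have b: "Re (ip (B u) u) \<in> WB" using u unfolding WB_def numrange_def by blast
    show ?thesis
      unfolding O.T_unit[OF u(2) u(1)] cmod_bridge eE lR_def lI_def kR_def kI_def
      using E_lower[OF WAne WBne WBb a b] unfolding lR_def lI_def kR_def kI_def .
  qed
  have LB: "e * (norm x)\<^sup>2 \<le> cmod (ip (O.T x) x)" if "x \<in> D" for x
    using O.LB_from_unit[of e x] epos U that by auto
  have inj: "inj_on O.T D" using O.T_inj[OF epos LB] .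
  have surj: "O.T ` D = UNIV" using O.T_surj[OF epos LB] .
  have bound: "norm (the_inv_into D O.T y) \<le> norm y / e" for y
  proof -
    have yr: "y \<in> O.T ` D" using surj by simp
    have xD: "the_inv_into D O.T y \<in> D" using the_inv_into_into[OF inj yr] by simp
    have Tx: "O.T (the_inv_into D O.T y) = y" using f_the_inv_into_f[OF inj yr] .
    have "e * norm (the_inv_into D O.T y) \<le> norm y" using O.nb[OF epos LB xD] unfolding Tx .
    then show ?thesis using epos by (simp add: pos_le_divide_eq mult.commute)
  qed
  show ?thesis unfolding Teq using inj surj bound unfolding bij_betw_def e_def WA_def WB_def by simp
qed


end
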